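(* Let $\alpha,\beta,\gamma,\delta\in\mathbb{C}$ be parameters for which all gamma functions and hypergeometric functions below are well-defined, and for $z\ne0$ let $$f(\alpha,\beta,\gamma,\delta;z)=\sum_{\nu=0}^{\infty}\frac{z^{-\nu}\Gamma(\alpha+\gamma+\nu)}{\nu!\,\Gamma(\beta+\nu)}\,E\left(\begin{matrix}\alpha+1,&\beta+\nu\\ \delta,&\beta+1+\nu\end{matrix};z\right).$$ Then for $z\neq0$, $$E(\alpha+1;\delta;z)E(\alpha+\gamma;\beta+1;-z)=f(\alpha,\beta,\gamma,\delta;z)-\frac1z f(\alpha+1,\beta+1,\gamma-1,\delta+1;z)$$ $$=\frac{\beta-\alpha-1}{\beta}f(\alpha,\beta,\gamma,\delta;z)+\frac1\beta f(\alpha+1,\beta,\gamma-1,\delta;z)+\frac{1}{\beta z^2}f(\alpha+1,\beta+2,\gamma,\delta+1;z)$$ $$=\frac{\beta-\delta+1}{\beta}f(\alpha,\beta,\gamma,\delta;z)+\frac1\beta f(\alpha,\beta,\gamma,\delta-1;z)+\frac{1}{\beta z^2}f(\alpha+1,\beta+2,\gamma,\delta+1;z).$$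
   Context: For complex parameters $a_1,\dots,a_p$, $b_1,\dots,b_q$ with $p\le q$ and $z\in\mathbb{C}\setminus\{0\}$, the MacRobert $E$-function is $$E\left(\begin{matrix}a_1,\dots,a_p\\ b_1,\dots,b_q\end{matrix};z\right)=\frac{\prod_{j=1}^p\Gamma(a_j)}{\prod_{j=1}^q\Gamma(b_j)}\,{}_pF_q\left(\begin{matrix}a_1,\dots,a_p\\ b_1,\dots,b_q\end{matrix};-\frac1z\right),$$ where ${}_pF_q$ is the generalized hypergeometric function. In particular $E(a;b;z)=\frac{\Gamma(a)}{\Gamma(b)}\,{}_1F_1(a;b;-1/z)$. *)

theory Defs
  imports "HOL-Analysis.Analysis"
begin

definition hypergeom :: "complex list \<Rightarrow> complex list \<Rightarrow> complex \<Rightarrow> complex" where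
  "hypergeom as bs z =
     (\<Sum>n. (prod_list (map (\<lambda>a. pochhammer a n) as) / prod_list (map (\<lambda>b. pochhammer b n) bs))
            * z ^ n / fact n)"

text \<open>MacRobert E-function (case p \<le> q).\<close>
definition MacRobertE :: "complex list \<Rightarrow> complex list \<Rightarrow> complex \<Rightarrow> complex" where
  "MacRobertE as bs z =
     prod_list (map Gamma as) / prod_list (map Gamma bs) * hypergeom as bs (- 1 / z)"

definition fser :: "complex \<Rightarrow> complex \<Rightarrow> complex \<Rightarrow> complex \<Rightarrow> complex \<Rightarrow> complex" where
  "fser \<alpha> \<beta> \<gamma> \<delta> z =
     (\<Sum>\<nu>. Gamma (\<alpha> + \<gamma> + of_nat \<nu>) / (z ^ \<nu> * fact \<nu> * Gamma (\<beta> + of_nat \<nu>))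
           * MacRobertE [\<alpha> + 1, \<beta> + of_nat \<nu>] [\<delta>, \<beta> + 1 + of_nat \<nu>] z)"

end

theory Submission
  imports Defs
begin

lemma np_add: fixes z::complex assumes "z \<notin> \<int>\<^sub>\<le>\<^sub>0" shows "z + of_nat n \<notin> \<int>\<^sub>\<le>\<^sub>0"
proof
  assume "z + of_nat n \<in> \<int>\<^sub>\<le>\<^sub>0"
  then obtain k where "z + of_nat n = - of_nat k" by (elim nonpos_Ints_cases')
  hence "z = - of_nat (k + n)" by (simp add: algebra_simps)
  hence "z \<in> \<int>\<^sub>\<le>\<^sub>0" by (simp only: minus_of_nat_in_nonpos_Ints)
  with assms show False by simp
qed

lemma np_add1: fixes z::complex shows "z \<notin> \<int>\<^sub>\<le>\<^sub>0 \<Longrightarrow> z + 1 \<notin> \<int>\<^sub>\<le>\<^sub>0"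
  using np_add[of z 1] by simp

lemma np_nz: fixes z::complex shows "z \<notin> \<int>\<^sub>\<le>\<^sub>0 \<Longrightarrow> z \<noteq> 0" by auto

definition h :: "complex \<Rightarrow> complex \<Rightarrow> complex \<Rightarrow> nat \<Rightarrow> complex" where
 "h a d x k = Gamma (a + of_nat k) * rGamma (d + of_nat k) * x ^ k / fact k"

definition ee :: "complex \<Rightarrow> complex \<Rightarrow> complex \<Rightarrow> complex \<Rightarrow> complex" where
  "ee a d b x = (\<Sum>k. h a d x k / (b + of_nat k))"

lemma ratio_summable:
  fixes f :: "nat \<Rightarrow> complex" and r :: "nat \<Rightarrow> real"
  assumes "r \<longlonglongrightarrow> 0" "\<And>n. norm (f (Suc n)) \<le> r n * norm (f n)"
  shows "summable (\<lambda>n. norm (f n))"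
proof -
  have "eventually (\<lambda>n. r n < 1/2) sequentially" using assms(1) by (rule order_tendstoD) simp
  then obtain N where N: "\<And>n. n \<ge> N \<Longrightarrow> r n < 1/2" by (auto simp: eventually_sequentially)
  show ?thesis
  proof (rule summable_ratio_test[of "1/2" N])
    fix n assume "n \<ge> N"
    hence "r n \<le> 1/2" using N[of n] by simp
    hence "r n * norm (f n) \<le> 1/2 * norm (f n)" by (intro mult_right_mono) auto
    thus "norm (norm (f (Suc n))) \<le> 1/2 * norm (norm (f n))" using assms(2)[of n] by simp
  qed simp
qed

lemma ratio_lim: fixes a d :: complex
  shows "(\<lambda>k. (a + of_nat k) / (d + of_nat k)) \<longlonglongrightarrow> 1"
proof -
  have "(\<lambda>k. (1 + a / of_nat k) / (1 + d / of_nat k)) \<longlonglongrightarrow> (1+0)/(1+0)"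
    by (intro tendsto_intros) auto
  moreover have "eventually (\<lambda>k. (1 + a / of_nat k) / (1 + d / of_nat k) = (a + of_nat k) / (d + of_nat k)) sequentially"
    using eventually_gt_at_top[of "0::nat"]
  proof eventually_elim
    case (elim k)
    have "(1 + a / of_nat k) = (a + of_nat k) / of_nat k" "(1 + d / of_nat k) = (d + of_nat k) / of_nat k"
      using elim by (auto simp: field_simps)
    thus ?case using elim by simp
  qed
  ultimately show ?thesis using Lim_transform_eventually by fastforce
qed

lemma h_Suc:
  assumes a: "a \<notin> \<int>\<^sub>\<le>\<^sub>0" and d: "d \<notin> \<int>\<^sub>\<le>\<^sub>0"
  shows "h a d x (Suc k) = h a d x k * ((a + of_nat k) / (d + of_nat k) * (x / of_nat (Suc k)))"
proof -
  have g: "Gamma (a + of_nat (Suc k)) = (a + of_nat k) * Gamma (a + of_nat k)"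
    using Gamma_plus1[OF np_add[OF a, of k]] by (simp add: add_ac)
  have r: "rGamma (d + of_nat (Suc k)) = rGamma (d + of_nat k) / (d + of_nat k)"
    using rGamma_plus1[of "d + of_nat k"] np_nz[OF np_add[OF d, of k]]
    by (simp add: add_ac field_simps)
  show ?thesis unfolding h_def g r using np_nz[OF np_add[OF d, of k]]
    by (simp add: field_simps)
qed

lemma h_summable:
  assumes a: "a \<notin> \<int>\<^sub>\<le>\<^sub>0" and d: "d \<notin> \<int>\<^sub>\<le>\<^sub>0"
  shows "summable (\<lambda>k. norm (h a d x k))"
proof (rule ratio_summable)
  show "(\<lambda>k. norm ((a + of_nat k) / (d + of_nat k) * (x / of_nat (Suc k)))) \<longlonglongrightarrow> 0"
  proof -
    have "(\<lambda>k. norm ((a + of_nat k) / (d + of_nat k) * (x / of_nat (Suc k)))) \<longlonglongrightarrow> norm (1 * (0::complex))"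
      by (intro tendsto_intros ratio_lim LIMSEQ_Suc[OF lim_const_over_n])
    thus ?thesis by simp
  qed
  fix n show "norm (h a d x (Suc n)) \<le> norm ((a + of_nat n) / (d + of_nat n) * (x / of_nat (Suc n))) * norm (h a d x n)"
    unfolding h_Suc[OF a d] norm_mult by (simp only: mult.commute order_refl)
qed

lemma bound_inv:
  fixes b :: complex assumes b: "b \<notin> \<int>\<^sub>\<le>\<^sub>0"
  shows "\<exists>C. \<forall>n. norm (1 / (b + of_nat n)) \<le> C"
proof -
  obtain N :: nat where N: "norm b + 1 \<le> real N" using real_arch_simple by blast
  define C where "C = 1 + (\<Sum>n<N. norm (1 / (b + of_nat n)))"
  have "norm (1 / (b + of_nat n)) \<le> C" for n
  proof (cases "n < N")
    case True
    hence "norm (1 / (b + of_nat n)) \<le> (\<Sum>n<N. norm (1 / (b + of_nat n)))"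
      by (intro member_le_sum) auto
    thus ?thesis unfolding C_def by simp
  next
    case False
    have "norm (of_nat n :: complex) \<le> norm (b + of_nat n) + norm b"
      using norm_triangle_ineq4[of "b + of_nat n" b] by simp
    hence "1 \<le> norm (b + of_nat n)" using False N by simp
    hence "norm (1 / (b + of_nat n)) \<le> 1" by (simp add: norm_divide divide_le_eq)
    moreover have "0 \<le> (\<Sum>n<N. norm (1 / (b + of_nat n)))" by (intro sum_nonneg) auto
    ultimately show ?thesis unfolding C_def by simp
  qed
  thus ?thesis by blast
qed

lemma ee_bound:
  assumes a: "a \<notin> \<int>\<^sub>\<le>\<^sub>0" and d: "d \<notin> \<int>\<^sub>\<le>\<^sub>0" and C: "\<And>n. norm (1 / (b + of_nat n)) \<le> C"
  shows "summable (\<lambda>k. norm (h a d x k / (b + of_nat k)))"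
    and "norm (ee a d b x) \<le> C * (\<Sum>k. norm (h a d x k))"
proof -
  have le: "norm (h a d x k / (b + of_nat k)) \<le> C * norm (h a d x k)" for k
  proof -
    have "norm (h a d x k / (b + of_nat k)) = norm (h a d x k) * norm (1 / (b + of_nat k))"
      by (simp add: norm_divide)
    also have "\<dots> \<le> norm (h a d x k) * C" by (intro mult_left_mono C) auto
    finally show ?thesis by (simp add: mult.commute)
  qed
  have s: "summable (\<lambda>k. C * norm (h a d x k))" by (intro summable_mult h_summable a d)
  show ss: "summable (\<lambda>k. norm (h a d x k / (b + of_nat k)))"
    by (rule summable_comparison_test[OF _ s]) (use le in auto)
  have "norm (ee a d b x) \<le> (\<Sum>k. norm (h a d x k / (b + of_nat k)))"
    unfolding ee_def by (rule summable_norm[OF ss])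
  also have "\<dots> \<le> (\<Sum>k. C * norm (h a d x k))" by (intro suminf_le le ss s)
  also have "\<dots> = C * (\<Sum>k. norm (h a d x k))" by (intro suminf_mult h_summable a d)
  finally show "norm (ee a d b x) \<le> C * (\<Sum>k. norm (h a d x k))" .
qed

lemma E1_form:
  assumes a: "a \<notin> \<int>\<^sub>\<le>\<^sub>0" and d: "d \<notin> \<int>\<^sub>\<le>\<^sub>0"
  shows "MacRobertE [a] [d] z = (\<Sum>k. h a d (-1/z) k)"
proof -
  define x where "x = -1/z"
  define K where "K = Gamma a / Gamma d"
  have K: "K \<noteq> 0" unfolding K_def using a d by (simp add: Gamma_eq_zero_iff)
  have pt: "pochhammer a n / pochhammer d n * x ^ n / fact n = h a d x n / K" for n
  proof -
    have "Gamma (a + of_nat n) \<noteq> 0" "Gamma (d + of_nat n) \<noteq> 0" "Gamma a \<noteq> 0" "Gamma d \<noteq> 0"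
      using np_add[OF a] np_add[OF d] a d by (auto simp: Gamma_eq_zero_iff)
    thus ?thesis unfolding h_def K_def pochhammer_Gamma[OF a] pochhammer_Gamma[OF d] rGamma_inverse_Gamma
      by (simp add: field_simps)
  qed
  have hs: "summable (h a d x)" by (rule summable_norm_cancel[OF h_summable[OF a d]])
  have "MacRobertE [a] [d] z = K * (\<Sum>n. pochhammer a n / pochhammer d n * x ^ n / fact n)"
    unfolding MacRobertE_def hypergeom_def K_def x_def by simp
  also have "\<dots> = K * ((\<Sum>n. h a d x n) / K)" unfolding pt by (subst suminf_divide[OF hs]) simp
  also have "\<dots> = (\<Sum>n. h a d x n)" using K by simp
  finally show ?thesis unfolding x_def .
qed

lemma E2_form:
  assumes a: "a \<notin> \<int>\<^sub>\<le>\<^sub>0" and d: "d \<notin> \<int>\<^sub>\<le>\<^sub>0" and b: "b \<notin> \<int>\<^sub>\<le>\<^sub>0"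
    and b1: "b1 = b + 1"
  shows "MacRobertE [a, b] [d, b1] z = ee a d b (-1/z)"
proof -
  define x where "x = -1/z"
  define K where "K = Gamma a * Gamma b / (Gamma d * Gamma (b + 1))"
  have b1': "b + 1 \<notin> \<int>\<^sub>\<le>\<^sub>0" using np_add1[OF b] .
  have K: "K \<noteq> 0" unfolding K_def using a d b b1' by (simp add: Gamma_eq_zero_iff)
  have pt: "pochhammer a n * pochhammer b n / (pochhammer d n * pochhammer (b+1) n) * x ^ n / fact n
       = (h a d x n / (b + of_nat n)) / K" for n
  proof -
    have nz: "Gamma (a + of_nat n) \<noteq> 0" "Gamma (d + of_nat n) \<noteq> 0" "Gamma a \<noteq> 0" "Gamma d \<noteq> 0"
       "Gamma b \<noteq> 0" "Gamma (b+1) \<noteq> 0" "Gamma (b + of_nat n) \<noteq> 0"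
      using np_add[OF a] np_add[OF d] np_add[OF b] a d b b1' by (auto simp: Gamma_eq_zero_iff)
    have nz2: "b + of_nat n \<noteq> 0" by (rule np_nz[OF np_add[OF b]])
    have g: "Gamma (b + 1 + of_nat n) = (b + of_nat n) * Gamma (b + of_nat n)"
      using Gamma_plus1[OF np_add[OF b, of n]] by (simp add: add_ac)
    define B where "B = b + of_nat n"
    have nzB: "B \<noteq> 0" "Gamma B \<noteq> 0" using nz nz2 unfolding B_def by auto
    show ?thesis unfolding h_def K_def pochhammer_Gamma[OF a] pochhammer_Gamma[OF d]
        pochhammer_Gamma[OF b] pochhammer_Gamma[OF b1'] rGamma_inverse_Gamma g B_def[symmetric]
      using nz nzB by (simp add: field_simps)
  qed
  obtain C where C: "\<And>n. norm (1 / (b + of_nat n)) \<le> C" using bound_inv[OF b] by blast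
  have hs: "summable (\<lambda>n. h a d x n / (b + of_nat n))"
    by (rule summable_norm_cancel[OF ee_bound(1)[OF a d C]])
  have "MacRobertE [a, b] [d, b1] z = K * (\<Sum>n. pochhammer a n * pochhammer b n / (pochhammer d n * pochhammer (b+1) n) * x ^ n / fact n)"
    unfolding MacRobertE_def hypergeom_def K_def x_def b1 by (simp add: mult_ac)
  also have "\<dots> = K * ((\<Sum>n. h a d x n / (b + of_nat n)) / K)" unfolding pt by (subst suminf_divide[OF hs]) simp
  also have "\<dots> = ee a d b x" using K unfolding ee_def by simp
  finally show ?thesis unfolding x_def .
qed

lemma fser_form:
  assumes A: "A = \<alpha> + 1" and G: "G = \<alpha> + \<gamma>"
    and a: "A \<notin> \<int>\<^sub>\<le>\<^sub>0" and b: "\<beta> \<notin> \<int>\<^sub>\<le>\<^sub>0" and d: "\<delta> \<notin> \<int>\<^sub>\<le>\<^sub>0"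
  shows "fser \<alpha> \<beta> \<gamma> \<delta> z = (\<Sum>\<nu>. h G \<beta> (1/z) \<nu> * ee A \<delta> (\<beta> + of_nat \<nu>) (-1/z))"
proof -
  have "Gamma (\<alpha> + \<gamma> + of_nat \<nu>) / (z ^ \<nu> * fact \<nu> * Gamma (\<beta> + of_nat \<nu>)) *
           MacRobertE [\<alpha> + 1, \<beta> + of_nat \<nu>] [\<delta>, \<beta> + 1 + of_nat \<nu>] z
       = h G \<beta> (1/z) \<nu> * ee A \<delta> (\<beta> + of_nat \<nu>) (-1/z)" for \<nu>
  proof -
    have "MacRobertE [\<alpha> + 1, \<beta> + of_nat \<nu>] [\<delta>, \<beta> + 1 + of_nat \<nu>] z = ee A \<delta> (\<beta> + of_nat \<nu>) (-1/z)"
      using E2_form[of A \<delta> "\<beta> + of_nat \<nu>" "\<beta> + 1 + of_nat \<nu>" z] a d np_add[OF b] A by simp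
    thus ?thesis unfolding h_def G rGamma_inverse_Gamma by (simp add: field_simps power_divide)
  qed
  thus ?thesis unfolding fser_def by simp
qed

lemma fser_summable:
  assumes a: "A \<notin> \<int>\<^sub>\<le>\<^sub>0" and b: "\<beta> \<notin> \<int>\<^sub>\<le>\<^sub>0" and d: "\<delta> \<notin> \<int>\<^sub>\<le>\<^sub>0"
    and g: "G \<notin> \<int>\<^sub>\<le>\<^sub>0"
  shows "summable (\<lambda>\<nu>. h G \<beta> y \<nu> * ee A \<delta> (\<beta> + of_nat \<nu>) x)"
proof -
  obtain C where C: "\<And>n. norm (1 / (\<beta> + of_nat n)) \<le> C" using bound_inv[OF b] by blast
  define M where "M = C * (\<Sum>k. norm (h A \<delta> x k))"
  have le: "norm (ee A \<delta> (\<beta> + of_nat \<nu>) x) \<le> M" for \<nu>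
  proof -
    have "norm (1 / (\<beta> + of_nat \<nu> + of_nat n)) \<le> C" for n
      using C[of "\<nu> + n"] by (simp add: add_ac)
    thus ?thesis unfolding M_def by (rule ee_bound(2)[OF a d])
  qed
  have le2: "norm (h G \<beta> y \<nu> * ee A \<delta> (\<beta> + of_nat \<nu>) x) \<le> M * norm (h G \<beta> y \<nu>)" for \<nu>
    unfolding norm_mult using mult_left_mono[OF le[of \<nu>] norm_ge_zero[of "h G \<beta> y \<nu>"]] by (simp add: mult.commute)
  have s: "summable (\<lambda>\<nu>. M * norm (h G \<beta> y \<nu>))" by (intro summable_mult h_summable g b)
  show ?thesis
    apply (rule summable_norm_cancel)
    apply (rule summable_comparison_test[OF _ s])
    using le2 by auto
qed

lemma ee_summable:
  assumes a: "a \<notin> \<int>\<^sub>\<le>\<^sub>0" and d: "d \<notin> \<int>\<^sub>\<le>\<^sub>0" and b: "b \<notin> \<int>\<^sub>\<le>\<^sub>0"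
  shows "summable (\<lambda>k. h a d x k / (b + of_nat k))"
proof -
  obtain C where C: "\<And>n. norm (1 / (b + of_nat n)) \<le> C" using bound_inv[OF b] by blast
  show ?thesis by (rule summable_norm_cancel[OF ee_bound(1)[OF a d C]])
qed

lemma K1:
  assumes a: "a \<notin> \<int>\<^sub>\<le>\<^sub>0" and d: "d \<notin> \<int>\<^sub>\<le>\<^sub>0" and b: "b \<notin> \<int>\<^sub>\<le>\<^sub>0"
  shows "summable (\<lambda>k. of_nat k * h a d x k / (b + of_nat k))"
    and "(\<Sum>k. of_nat k * h a d x k / (b + of_nat k)) = x * ee (a+1) (d+1) (b+1) x"
proof -
  define f where "f k = of_nat k * h a d x k / (b + of_nat k)" for k
  have s: "summable (\<lambda>j. h (a+1) (d+1) x j / (b + 1 + of_nat j))"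
    by (intro ee_summable np_add1 a b d)
  have pt: "f (Suc j) = x * (h (a+1) (d+1) x j / (b + 1 + of_nat j))" for j
  proof -
    have e: "a + of_nat (Suc j) = a + 1 + of_nat j" "d + of_nat (Suc j) = d + 1 + of_nat j"
      "b + of_nat (Suc j) = b + 1 + of_nat j" by (simp_all add: add_ac)
    have gen: "of_nat (Suc j) * (G * R * x ^ Suc j / fact (Suc j)) / B = x * (G * R * x ^ j / fact j / B)"
      for G R B :: complex
      by (simp add: fact_Suc field_simps del: of_nat_Suc)
    show ?thesis unfolding f_def h_def e by (rule gen)
  qed
  have "(\<lambda>j. f (Suc j)) sums (x * ee (a+1) (d+1) (b+1) x)"
    unfolding pt ee_def by (intro sums_mult summable_sums s)
  hence "f sums (x * ee (a+1) (d+1) (b+1) x)" by (subst (asm) sums_Suc_iff) (simp add: f_def)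
  thus "summable (\<lambda>k. of_nat k * h a d x k / (b + of_nat k))"
    and "(\<Sum>k. of_nat k * h a d x k / (b + of_nat k)) = x * ee (a+1) (d+1) (b+1) x"
    unfolding f_def by (auto simp: sums_iff)
qed

lemma K2:
  assumes a: "a \<notin> \<int>\<^sub>\<le>\<^sub>0" and d: "d \<notin> \<int>\<^sub>\<le>\<^sub>0" and b: "b \<notin> \<int>\<^sub>\<le>\<^sub>0"
  shows "b * ee a d b x = (\<Sum>k. h a d x k) - (\<Sum>k. of_nat k * h a d x k / (b + of_nat k))"
proof -
  have pt: "b * (h a d x k / (b + of_nat k)) = h a d x k - of_nat k * h a d x k / (b + of_nat k)" for k
  proof -
    have gen: "B \<noteq> 0 \<Longrightarrow> B = b + of_nat k \<Longrightarrow> b * (H / B) = H - of_nat k * H / B" for H B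
      by (simp add: field_simps)
    show ?thesis by (rule gen[OF np_nz[OF np_add[OF b]] refl])
  qed
  have "b * ee a d b x = (\<Sum>k. b * (h a d x k / (b + of_nat k)))"
    unfolding ee_def by (intro suminf_mult[symmetric] ee_summable a b d)
  also have "\<dots> = (\<Sum>k. h a d x k - of_nat k * h a d x k / (b + of_nat k))" unfolding pt ..
  also have "\<dots> = (\<Sum>k. h a d x k) - (\<Sum>k. of_nat k * h a d x k / (b + of_nat k))"
    by (rule suminf_diff[symmetric]) (intro summable_norm_cancel[OF h_summable] a d, intro K1(1) a b d)
  finally show ?thesis .
qed

lemma K3:
  assumes a: "a \<notin> \<int>\<^sub>\<le>\<^sub>0" and d: "d \<notin> \<int>\<^sub>\<le>\<^sub>0" and b: "b \<notin> \<int>\<^sub>\<le>\<^sub>0"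
  shows "ee (a+1) d b x - a * ee a d b x = (\<Sum>k. of_nat k * h a d x k / (b + of_nat k))"
proof -
  have pt: "h (a+1) d x k / (b + of_nat k) - a * (h a d x k / (b + of_nat k)) = of_nat k * h a d x k / (b + of_nat k)" for k
  proof -
    have "Gamma (a + 1 + of_nat k) = (a + of_nat k) * Gamma (a + of_nat k)"
      using Gamma_plus1[OF np_add[OF a, of k]] by (simp add: add_ac)
    hence "h (a+1) d x k = (a + of_nat k) * h a d x k" unfolding h_def by simp
    thus ?thesis by (simp add: divide_inverse algebra_simps)
  qed
  have "ee (a+1) d b x - a * ee a d b x = (\<Sum>k. h (a+1) d x k / (b + of_nat k)) - (\<Sum>k. a * (h a d x k / (b + of_nat k)))"
    unfolding ee_def by (subst suminf_mult[symmetric]) (intro ee_summable a b d, simp)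
  also have "\<dots> = (\<Sum>k. h (a+1) d x k / (b + of_nat k) - a * (h a d x k / (b + of_nat k)))"
    by (rule suminf_diff) (intro ee_summable np_add1 a b d, intro summable_mult ee_summable a b d)
  also have "\<dots> = (\<Sum>k. of_nat k * h a d x k / (b + of_nat k))" unfolding pt ..
  finally show ?thesis .
qed

lemma K4:
  assumes a: "a \<notin> \<int>\<^sub>\<le>\<^sub>0" and d1: "d - 1 \<notin> \<int>\<^sub>\<le>\<^sub>0" and b: "b \<notin> \<int>\<^sub>\<le>\<^sub>0"
  shows "ee a (d - 1) b x + (1 - d) * ee a d b x = (\<Sum>k. of_nat k * h a d x k / (b + of_nat k))"
proof -
  have d: "d \<notin> \<int>\<^sub>\<le>\<^sub>0" using np_add1[OF d1] by simp
  have pt: "h a (d-1) x k / (b + of_nat k) + (1 - d) * (h a d x k / (b + of_nat k)) = of_nat k * h a d x k / (b + of_nat k)" for k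
  proof -
    have "rGamma (d - 1 + of_nat k) = (d - 1 + of_nat k) * rGamma (d + of_nat k)"
      using rGamma_plus1[of "d - 1 + of_nat k"] by (simp add: add_ac)
    hence eq: "h a (d-1) x k = (d - 1 + of_nat k) * h a d x k" unfolding h_def by simp
    show ?thesis unfolding eq by (simp add: divide_inverse algebra_simps)
  qed
  have "ee a (d - 1) b x + (1 - d) * ee a d b x = (\<Sum>k. h a (d-1) x k / (b + of_nat k)) + (\<Sum>k. (1 - d) * (h a d x k / (b + of_nat k)))"
    unfolding ee_def by (subst suminf_mult[symmetric]) (intro ee_summable a b d, simp)
  also have "\<dots> = (\<Sum>k. h a (d-1) x k / (b + of_nat k) + (1 - d) * (h a d x k / (b + of_nat k)))"
    by (intro suminf_add summable_mult ee_summable a b d d1)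
  also have "\<dots> = (\<Sum>k. of_nat k * h a d x k / (b + of_nat k))" unfolding pt ..
  finally show ?thesis .
qed

lemma alg2:
  fixes \<alpha> \<beta> z b m c e1 e2 e3 EA :: complex
  assumes "\<beta> \<noteq> 0" "z \<noteq> 0" "b = \<beta> + m" "e2 = (\<alpha>+1)*e1 + (-1/z)*e3" "EA = b*e1 - 1/z*e3"
  shows "(\<beta> - \<alpha> - 1) / \<beta> * (b*c*e1) + 1/\<beta> * (b*c*e2) + 1/\<beta> * (c*(m/z)*e3) = EA * c"
  using assms(1,2) unfolding assms(3,4,5) by (simp add: field_simps)

lemma alg3:
  fixes \<delta> \<beta> z b m c e1 e4 e3 EA :: complex
  assumes "\<beta> \<noteq> 0" "z \<noteq> 0" "b = \<beta> + m" "e4 = (\<delta>-1)*e1 + (-1/z)*e3" "EA = b*e1 - 1/z*e3"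
  shows "(\<beta> - \<delta> + 1) / \<beta> * (b*c*e1) + 1/\<beta> * (b*c*e4) + 1/\<beta> * (c*(m/z)*e3) = EA * c"
  using assms(1,2) unfolding assms(3,4,5) by (simp add: field_simps)

theorem mainTheorem5:
  fixes \<alpha> \<beta> \<gamma> \<delta> z :: complex
  assumes z: "z \<noteq> 0"
    and a: "\<alpha> + 1 \<notin> \<int>\<^sub>\<le>\<^sub>0"
    and b: "\<beta> \<notin> \<int>\<^sub>\<le>\<^sub>0"
    and d: "\<delta> - 1 \<notin> \<int>\<^sub>\<le>\<^sub>0"
    and ag: "\<alpha> + \<gamma> \<notin> \<int>\<^sub>\<le>\<^sub>0"
  shows "(MacRobertE [\<alpha> + 1] [\<delta>] z * MacRobertE [\<alpha> + \<gamma>] [\<beta> + 1] (- z)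
           = fser \<alpha> \<beta> \<gamma> \<delta> z - (1 / z) * fser (\<alpha> + 1) (\<beta> + 1) (\<gamma> - 1) (\<delta> + 1) z) \<and>
         (MacRobertE [\<alpha> + 1] [\<delta>] z * MacRobertE [\<alpha> + \<gamma>] [\<beta> + 1] (- z)
           = (\<beta> - \<alpha> - 1) / \<beta> * fser \<alpha> \<beta> \<gamma> \<delta> z
             + (1 / \<beta>) * fser (\<alpha> + 1) \<beta> (\<gamma> - 1) \<delta> z
             + 1 / (\<beta> * z ^ 2) * fser (\<alpha> + 1) (\<beta> + 2) \<gamma> (\<delta> + 1) z) \<and>
         (MacRobertE [\<alpha> + 1] [\<delta>] z * MacRobertE [\<alpha> + \<gamma>] [\<beta> + 1] (- z)
           = (\<beta> - \<delta> + 1) / \<beta> * fser \<alpha> \<beta> \<gamma> \<delta> z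
             + (1 / \<beta>) * fser \<alpha> \<beta> \<gamma> (\<delta> - 1) z
             + 1 / (\<beta> * z ^ 2) * fser (\<alpha> + 1) (\<beta> + 2) \<gamma> (\<delta> + 1) z)"
proof -
  have a2: "\<alpha> + 1 + 1 \<notin> \<int>\<^sub>\<le>\<^sub>0" by (rule np_add1[OF a])
  have b1: "\<beta> + 1 \<notin> \<int>\<^sub>\<le>\<^sub>0" by (rule np_add1[OF b])
  have b2: "\<beta> + 2 \<notin> \<int>\<^sub>\<le>\<^sub>0" using np_add[OF b, of 2] by simp
  have dd: "\<delta> \<notin> \<int>\<^sub>\<le>\<^sub>0" using np_add1[OF d] by simp
  have d1: "\<delta> + 1 \<notin> \<int>\<^sub>\<le>\<^sub>0" by (rule np_add1[OF dd])
  have ag1: "\<alpha> + 1 + \<gamma> \<notin> \<int>\<^sub>\<le>\<^sub>0" using np_add1[OF ag] by (simp add: add_ac)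
  have bnz: "\<beta> \<noteq> 0" by (rule np_nz[OF b])
  define c where "c \<nu> = h (\<alpha> + \<gamma>) (\<beta> + 1) (1/z) \<nu>" for \<nu>
  define EA where "EA = (\<Sum>k. h (\<alpha> + 1) \<delta> (-1/z) k)"
  define e1 where "e1 \<nu> = ee (\<alpha>+1) \<delta> (\<beta> + of_nat \<nu>) (-1/z)" for \<nu>
  define e2 where "e2 \<nu> = ee (\<alpha>+1+1) \<delta> (\<beta> + of_nat \<nu>) (-1/z)" for \<nu>
  define e3 where "e3 \<nu> = ee (\<alpha>+1+1) (\<delta>+1) (\<beta> + of_nat \<nu> + 1) (-1/z)" for \<nu>
  define e4 where "e4 \<nu> = ee (\<alpha>+1) (\<delta>-1) (\<beta> + of_nat \<nu>) (-1/z)" for \<nu>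
  have sc: "summable c" unfolding c_def by (rule summable_norm_cancel[OF h_summable[OF ag b1]])
  have LHS: "MacRobertE [\<alpha> + 1] [\<delta>] z * MacRobertE [\<alpha> + \<gamma>] [\<beta> + 1] (- z) = (\<Sum>\<nu>. EA * c \<nu>)"
  proof -
    have "MacRobertE [\<alpha> + \<gamma>] [\<beta> + 1] (- z) = (\<Sum>\<nu>. c \<nu>)"
      unfolding c_def E1_form[OF ag b1] by simp
    thus ?thesis unfolding E1_form[OF a dd] EA_def[symmetric] by (simp add: suminf_mult[OF sc])
  qed
  have hb: "h (\<alpha> + \<gamma>) \<beta> (1/z) \<nu> = (\<beta> + of_nat \<nu>) * c \<nu>" for \<nu>
  proof -
    have "rGamma (\<beta> + of_nat \<nu>) = (\<beta> + of_nat \<nu>) * rGamma (\<beta> + 1 + of_nat \<nu>)"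
      using rGamma_plus1[of "\<beta> + of_nat \<nu>"] by (simp add: add_ac)
    thus ?thesis unfolding h_def c_def by simp
  qed
  have bnu: "\<beta> + of_nat \<nu> \<notin> \<int>\<^sub>\<le>\<^sub>0" for \<nu> by (rule np_add[OF b])
  have S: "(\<Sum>k. of_nat k * h (\<alpha>+1) \<delta> (-1/z) k / (\<beta> + of_nat \<nu> + of_nat k)) = (-1/z) * e3 \<nu>" for \<nu>
    unfolding e3_def by (rule K1(2)[OF a dd bnu])
  have P1: "(\<beta> + of_nat \<nu>) * e1 \<nu> - 1/z * e3 \<nu> = EA" for \<nu>
    using K2[OF a dd bnu, where x="-1/z"] S[of \<nu>] unfolding e1_def EA_def by simp
  have P2: "e2 \<nu> = (\<alpha>+1) * e1 \<nu> + (-1/z) * e3 \<nu>" for \<nu>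
    using K3[OF a dd bnu, where x="-1/z"] S[of \<nu>] unfolding e1_def e2_def by (simp add: algebra_simps)
  have P4: "e4 \<nu> = (\<delta>-1) * e1 \<nu> + (-1/z) * e3 \<nu>" for \<nu>
    using K4[OF a d bnu, where x="-1/z"] S[of \<nu>] unfolding e1_def e4_def by (simp add: algebra_simps)
  have F1: "fser \<alpha> \<beta> \<gamma> \<delta> z = (\<Sum>\<nu>. (\<beta> + of_nat \<nu>) * c \<nu> * e1 \<nu>)"
    unfolding fser_form[OF refl refl a b dd] e1_def hb ..
  have S1: "summable (\<lambda>\<nu>. (\<beta> + of_nat \<nu>) * c \<nu> * e1 \<nu>)"
    using fser_summable[OF a b dd ag, where y="1/z" and x="-1/z"] unfolding e1_def hb .
  have ag': "\<alpha> + 1 + (\<gamma> - 1) = \<alpha> + \<gamma>" by simp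
  have F2: "fser (\<alpha> + 1) (\<beta> + 1) (\<gamma> - 1) (\<delta> + 1) z = (\<Sum>\<nu>. c \<nu> * e3 \<nu>)"
    unfolding fser_form[of "\<alpha>+1+1" "\<alpha>+1" "\<alpha>+\<gamma>" "\<gamma>-1", OF refl ag'[symmetric] a2 b1 d1] e3_def c_def
    by (simp add: add_ac)
  have S2: "summable (\<lambda>\<nu>. c \<nu> * e3 \<nu>)"
    using fser_summable[OF a2 b1 d1 ag, where y="1/z" and x="-1/z"] unfolding e3_def c_def by (simp add: add_ac)
  have F3: "fser (\<alpha> + 1) \<beta> (\<gamma> - 1) \<delta> z = (\<Sum>\<nu>. (\<beta> + of_nat \<nu>) * c \<nu> * e2 \<nu>)"
    unfolding fser_form[of "\<alpha>+1+1" "\<alpha>+1" "\<alpha>+\<gamma>" "\<gamma>-1", OF refl ag'[symmetric] a2 b dd] e2_def hb[symmetric]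
    by (simp add: add_ac)
  have S3: "summable (\<lambda>\<nu>. (\<beta> + of_nat \<nu>) * c \<nu> * e2 \<nu>)"
    using fser_summable[OF a2 b dd ag, where y="1/z" and x="-1/z"] unfolding e2_def hb .
  have F4: "fser \<alpha> \<beta> \<gamma> (\<delta> - 1) z = (\<Sum>\<nu>. (\<beta> + of_nat \<nu>) * c \<nu> * e4 \<nu>)"
    unfolding fser_form[OF refl refl a b d] e4_def hb ..
  have S4: "summable (\<lambda>\<nu>. (\<beta> + of_nat \<nu>) * c \<nu> * e4 \<nu>)"
    using fser_summable[OF a b d ag, where y="1/z" and x="-1/z"] unfolding e4_def hb .
  define y where "y \<nu> = h (\<alpha> + 1 + \<gamma>) (\<beta> + 2) (1/z) \<nu> * ee (\<alpha>+1+1) (\<delta>+1) (\<beta> + 2 + of_nat \<nu>) (-1/z)" for \<nu>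
  have F5: "fser (\<alpha> + 1) (\<beta> + 2) \<gamma> (\<delta> + 1) z = (\<Sum>\<nu>. y \<nu>)"
    unfolding fser_form[of "\<alpha>+1+1" "\<alpha>+1" "\<alpha>+1+\<gamma>", OF refl refl a2 b2 d1] y_def ..
  have S5: "summable y" unfolding y_def by (rule fser_summable[OF a2 b2 d1 ag1])
  define y' where "y' m = c m * (of_nat m / z) * e3 m" for m
  have y'Suc: "y' (Suc n) = 1 / z^2 * y n" for n
  proof -
    have e: "\<alpha> + \<gamma> + of_nat (Suc n) = \<alpha> + 1 + \<gamma> + of_nat n" "\<beta> + 1 + of_nat (Suc n) = \<beta> + 2 + of_nat n"
      "\<beta> + of_nat (Suc n) + 1 = \<beta> + 2 + of_nat n" by (simp_all add: add_ac)
    have gen: "G * R * (1/z) ^ Suc n / fact (Suc n) * (of_nat (Suc n) / z) * E = 1 / z^2 * (G * R * (1/z) ^ n / fact n * E)"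
      for G R E :: complex
      using z by (simp add: fact_Suc field_simps power2_eq_square del: of_nat_Suc)
    show ?thesis unfolding y'_def y_def c_def e3_def h_def e by (rule gen)
  qed
  have "(\<lambda>n. y' (Suc n)) sums (1/z^2 * (\<Sum>\<nu>. y \<nu>))"
    unfolding y'Suc by (intro sums_mult summable_sums S5)
  hence y'sums: "y' sums (1/z^2 * (\<Sum>\<nu>. y \<nu>))" by (subst (asm) sums_Suc_iff) (simp add: y'_def)
  have S6: "summable y'" using y'sums by (rule sums_summable)
  have F6: "1 / (\<beta> * z ^ 2) * fser (\<alpha> + 1) (\<beta> + 2) \<gamma> (\<delta> + 1) z = 1/\<beta> * (\<Sum>m. y' m)"
    unfolding F5 sums_unique[OF y'sums, symmetric] by (simp add: field_simps)
  show ?thesis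
  proof (intro conjI)
    show "MacRobertE [\<alpha> + 1] [\<delta>] z * MacRobertE [\<alpha> + \<gamma>] [\<beta> + 1] (- z)
           = fser \<alpha> \<beta> \<gamma> \<delta> z - (1 / z) * fser (\<alpha> + 1) (\<beta> + 1) (\<gamma> - 1) (\<delta> + 1) z"
    proof -
      have "fser \<alpha> \<beta> \<gamma> \<delta> z - (1 / z) * fser (\<alpha> + 1) (\<beta> + 1) (\<gamma> - 1) (\<delta> + 1) z
          = (\<Sum>\<nu>. (\<beta> + of_nat \<nu>) * c \<nu> * e1 \<nu> - 1/z * (c \<nu> * e3 \<nu>))"
        unfolding F1 F2 by (subst suminf_mult[OF S2, symmetric], rule suminf_diff[OF S1 summable_mult[OF S2]])
      also have "\<dots> = (\<Sum>\<nu>. EA * c \<nu>)"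
      proof (rule suminf_cong)
        fix \<nu> show "(\<beta> + of_nat \<nu>) * c \<nu> * e1 \<nu> - 1/z * (c \<nu> * e3 \<nu>) = EA * c \<nu>"
          unfolding P1[of \<nu>, symmetric] by (simp add: algebra_simps)
      qed
      finally show ?thesis unfolding LHS ..
    qed
    show "MacRobertE [\<alpha> + 1] [\<delta>] z * MacRobertE [\<alpha> + \<gamma>] [\<beta> + 1] (- z)
           = (\<beta> - \<alpha> - 1) / \<beta> * fser \<alpha> \<beta> \<gamma> \<delta> z
             + (1 / \<beta>) * fser (\<alpha> + 1) \<beta> (\<gamma> - 1) \<delta> z
             + 1 / (\<beta> * z ^ 2) * fser (\<alpha> + 1) (\<beta> + 2) \<gamma> (\<delta> + 1) z"
    proof -
      have "(\<beta> - \<alpha> - 1) / \<beta> * fser \<alpha> \<beta> \<gamma> \<delta> z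
             + (1 / \<beta>) * fser (\<alpha> + 1) \<beta> (\<gamma> - 1) \<delta> z
             + 1 / (\<beta> * z ^ 2) * fser (\<alpha> + 1) (\<beta> + 2) \<gamma> (\<delta> + 1) z
          = (\<Sum>\<nu>. (\<beta> - \<alpha> - 1) / \<beta> * ((\<beta> + of_nat \<nu>) * c \<nu> * e1 \<nu>)) + (\<Sum>\<nu>. 1/\<beta> * ((\<beta> + of_nat \<nu>) * c \<nu> * e2 \<nu>))
            + (\<Sum>\<nu>. 1/\<beta> * y' \<nu>)"
        unfolding F6 F1 F3 by (simp only: suminf_mult[OF S1] suminf_mult[OF S3] suminf_mult[OF S6])
      also have "\<dots> = (\<Sum>\<nu>. (\<beta> - \<alpha> - 1) / \<beta> * ((\<beta> + of_nat \<nu>) * c \<nu> * e1 \<nu>) + 1/\<beta> * ((\<beta> + of_nat \<nu>) * c \<nu> * e2 \<nu>)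
            + 1/\<beta> * y' \<nu>)"
        by (simp only: suminf_add[OF summable_mult[OF S1] summable_mult[OF S3]]
             suminf_add[OF summable_add[OF summable_mult[OF S1] summable_mult[OF S3]] summable_mult[OF S6]])
      also have "\<dots> = (\<Sum>\<nu>. EA * c \<nu>)"
      proof (rule suminf_cong)
        fix \<nu> show "(\<beta> - \<alpha> - 1) / \<beta> * ((\<beta> + of_nat \<nu>) * c \<nu> * e1 \<nu>) + 1/\<beta> * ((\<beta> + of_nat \<nu>) * c \<nu> * e2 \<nu>)
            + 1/\<beta> * y' \<nu> = EA * c \<nu>"
          unfolding y'_def by (rule alg2[OF bnz z refl P2 P1[symmetric]])
      qed
      finally show ?thesis unfolding LHS ..
    qed
    show "MacRobertE [\<alpha> + 1] [\<delta>] z * MacRobertE [\<alpha> + \<gamma>] [\<beta> + 1] (- z)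
           = (\<beta> - \<delta> + 1) / \<beta> * fser \<alpha> \<beta> \<gamma> \<delta> z
             + (1 / \<beta>) * fser \<alpha> \<beta> \<gamma> (\<delta> - 1) z
             + 1 / (\<beta> * z ^ 2) * fser (\<alpha> + 1) (\<beta> + 2) \<gamma> (\<delta> + 1) z"
    proof -
      have "(\<beta> - \<delta> + 1) / \<beta> * fser \<alpha> \<beta> \<gamma> \<delta> z
             + (1 / \<beta>) * fser \<alpha> \<beta> \<gamma> (\<delta> - 1) z
             + 1 / (\<beta> * z ^ 2) * fser (\<alpha> + 1) (\<beta> + 2) \<gamma> (\<delta> + 1) z
          = (\<Sum>\<nu>. (\<beta> - \<delta> + 1) / \<beta> * ((\<beta> + of_nat \<nu>) * c \<nu> * e1 \<nu>)) + (\<Sum>\<nu>. 1/\<beta> * ((\<beta> + of_nat \<nu>) * c \<nu> * e4 \<nu>))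
            + (\<Sum>\<nu>. 1/\<beta> * y' \<nu>)"
        unfolding F6 F1 F4 by (simp only: suminf_mult[OF S1] suminf_mult[OF S4] suminf_mult[OF S6])
      also have "\<dots> = (\<Sum>\<nu>. (\<beta> - \<delta> + 1) / \<beta> * ((\<beta> + of_nat \<nu>) * c \<nu> * e1 \<nu>) + 1/\<beta> * ((\<beta> + of_nat \<nu>) * c \<nu> * e4 \<nu>)
            + 1/\<beta> * y' \<nu>)"
        by (simp only: suminf_add[OF summable_mult[OF S1] summable_mult[OF S4]]
             suminf_add[OF summable_add[OF summable_mult[OF S1] summable_mult[OF S4]] summable_mult[OF S6]])
      also have "\<dots> = (\<Sum>\<nu>. EA * c \<nu>)"
      proof (rule suminf_cong)
        fix \<nu> show "(\<beta> - \<delta> + 1) / \<beta> * ((\<beta> + of_nat \<nu>) * c \<nu> * e1 \<nu>) + 1/\<beta> * ((\<beta> + of_nat \<nu>) * c \<nu> * e4 \<nu>)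
            + 1/\<beta> * y' \<nu> = EA * c \<nu>"
          unfolding y'_def by (rule alg3[OF bnz z refl P4 P1[symmetric]])
      qed
      finally show ?thesis unfolding LHS ..
    qed
  qed
qed

end
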